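(* For every backward trie $\mathsf{T}_b$ with $n$ nodes, $\mathsf{CDAWG}(\mathsf{T}_b)$ has at most $2n-3$ nodes and at most $2n-4$ edges, independently of the alphabet size.
   Context: An alphabet $\Sigma$ is a finite ordered set of characters. A forward trie $\mathsf{T}_f$ is a rooted tree with $n$ nodes in which every edge is directed from parent to child and labeled by a single character of $\Sigma$, such that the edges leaving any node carry pairwise distinct labels. The backward trie $\mathsf{T}_b$ is obtained from $\mathsf{T}_f$ by reversing the direction of every edge while keeping its label; it has the same nodes and root $r$. For nodes $u,v$ with $u$ an ancestor of $v$ (possibly $u=v$), $\mathrm{str}_b(v,u)$ is the string of labels read along the reversed (upward) path from $v$ to $u$. Define $\mathrm{Substr}(\mathsf{T}_b)=\{\mathrm{str}_b(v,u): u \text{ an ancestor of } v\}$. A string $Y\in\mathrm{Substr}(\mathsf{T}_b)$ is left-maximal on $\mathsf{T}_b$ if either there are distinct characters $a\ne b$ with $aY,bY\in\mathrm{Substr}(\mathsf{T}_b)$, or $Y=\mathrm{str}_b(\ell,u)$ for some leaf $\ell$; it is right-maximal on $\mathsf{T}_b$ if either there are distinct $a\ne b$ with $Ya,Yb\in\mathrm{Substr}(\mathsf{T}_b)$, or $Y=\mathrm{str}_b(v,r)$ for some node $v$; it is maximal if it is both. For $Y\in\mathrm{Substr}(\mathsf{T}_b)$ let $\mathrm{mx}_b(Y)$ be the shortest maximal string on $\mathsf{T}_b$ of the form $\gamma Y\delta$ with $\gamma,\delta\in\Sigma^*$. Two substrings $Y,Y'$ are equivalent iff $\mathrm{mx}_b(Y)=\mathrm{mx}_b(Y')$.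 $\mathsf{CDAWG}(\mathsf{T}_b)$ is the edge-labeled DAG whose nodes are these equivalence classes; for each class $C$ with representative $M=\mathrm{mx}_b(Y)$ ($Y\in C$) and each character $a$ with $Ma\in\mathrm{Substr}(\mathsf{T}_b)$ there is exactly one edge leaving $C$ whose label begins with $a$ (it leads to the class of $Ma$ and is labeled $a\beta$, where $Ma\beta$ is the shortest right-maximal string on $\mathsf{T}_b$ having $Ma$ as a prefix), and there are no other edges. *)

theory Defs
  imports Main
begin

text \<open>A forward trie on node set V with root r: every non-root node v has parent
  par v (the value of par at the root is irrelevant) and the edge (par v, v)
  carries label lab v.  The backward trie has the same nodes/labels with edges
  reversed.\<close>

definition is_trie :: "'v set \<Rightarrow> 'v \<Rightarrow> ('v \<Rightarrow> 'v) \<Rightarrow> ('v \<Rightarrow> 'c) \<Rightarrow> bool" where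
  "is_trie V r par lab \<longleftrightarrow>
     finite V \<and> r \<in> V \<and>
     (\<forall>v\<in>V. v \<noteq> r \<longrightarrow> par v \<in> V) \<and>
     (\<forall>v\<in>V. \<exists>k. (par ^^ k) v = r) \<and>
     (\<forall>v\<in>V. \<forall>w\<in>V. v \<noteq> r \<and> w \<noteq> r \<and> v \<noteq> w \<and> par v = par w \<longrightarrow> lab v \<noteq> lab w)"

definition up_ok :: "'v \<Rightarrow> ('v \<Rightarrow> 'v) \<Rightarrow> 'v \<Rightarrow> nat \<Rightarrow> bool" where
  "up_ok r par v k \<longleftrightarrow> (\<forall>i<k. (par ^^ i) v \<noteq> r)"

text \<open>str_b(v, (par^^k) v): labels read on the upward path of length k from v.\<close>
definition str_b :: "('v \<Rightarrow> 'v) \<Rightarrow> ('v \<Rightarrow> 'c) \<Rightarrow> 'v \<Rightarrow> nat \<Rightarrow> 'c list" where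
  "str_b par lab v k = map (\<lambda>i. lab ((par ^^ i) v)) [0..<k]"

definition Substr_b :: "'v set \<Rightarrow> 'v \<Rightarrow> ('v \<Rightarrow> 'v) \<Rightarrow> ('v \<Rightarrow> 'c) \<Rightarrow> 'c list set" where
  "Substr_b V r par lab = {str_b par lab v k | v k. v \<in> V \<and> up_ok r par v k}"

definition is_leaf :: "'v set \<Rightarrow> 'v \<Rightarrow> ('v \<Rightarrow> 'v) \<Rightarrow> 'v \<Rightarrow> bool" where
  "is_leaf V r par l \<longleftrightarrow> l \<in> V \<and> \<not> (\<exists>w\<in>V. w \<noteq> r \<and> par w = l)"

definition left_max :: "'v set \<Rightarrow> 'v \<Rightarrow> ('v \<Rightarrow> 'v) \<Rightarrow> ('v \<Rightarrow> 'c) \<Rightarrow> 'c list \<Rightarrow> bool" where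
  "left_max V r par lab Y \<longleftrightarrow> Y \<in> Substr_b V r par lab \<and>
     ((\<exists>a b. a \<noteq> b \<and> a # Y \<in> Substr_b V r par lab \<and> b # Y \<in> Substr_b V r par lab) \<or>
      (\<exists>l k. is_leaf V r par l \<and> up_ok r par l k \<and> Y = str_b par lab l k))"

definition right_max :: "'v set \<Rightarrow> 'v \<Rightarrow> ('v \<Rightarrow> 'v) \<Rightarrow> ('v \<Rightarrow> 'c) \<Rightarrow> 'c list \<Rightarrow> bool" where
  "right_max V r par lab Y \<longleftrightarrow> Y \<in> Substr_b V r par lab \<and>
     ((\<exists>a b. a \<noteq> b \<and> Y @ [a] \<in> Substr_b V r par lab \<and> Y @ [b] \<in> Substr_b V r par lab) \<or>
      (\<exists>v k. v \<in> V \<and> up_ok r par v k \<and> (par ^^ k) v = r \<and> Y = str_b par lab v k))"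

definition maximal_b :: "'v set \<Rightarrow> 'v \<Rightarrow> ('v \<Rightarrow> 'v) \<Rightarrow> ('v \<Rightarrow> 'c) \<Rightarrow> 'c list \<Rightarrow> bool" where
  "maximal_b V r par lab Y \<longleftrightarrow> left_max V r par lab Y \<and> right_max V r par lab Y"

definition is_factor :: "'c list \<Rightarrow> 'c list \<Rightarrow> bool" where
  "is_factor Y M \<longleftrightarrow> (\<exists>\<gamma> \<delta>. M = \<gamma> @ Y @ \<delta>)"

definition mx_b :: "'v set \<Rightarrow> 'v \<Rightarrow> ('v \<Rightarrow> 'v) \<Rightarrow> ('v \<Rightarrow> 'c) \<Rightarrow> 'c list \<Rightarrow> 'c list" where
  "mx_b V r par lab Y = (SOME M. maximal_b V r par lab M \<and> is_factor Y M \<and>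
      (\<forall>M'. maximal_b V r par lab M' \<and> is_factor Y M' \<longrightarrow> length M \<le> length M'))"

definition cdawg_nodes :: "'v set \<Rightarrow> 'v \<Rightarrow> ('v \<Rightarrow> 'v) \<Rightarrow> ('v \<Rightarrow> 'c) \<Rightarrow> 'c list set set" where
  "cdawg_nodes V r par lab =
     Substr_b V r par lab // {(Y, Y'). Y \<in> Substr_b V r par lab \<and> Y' \<in> Substr_b V r par lab \<and>
                               mx_b V r par lab Y = mx_b V r par lab Y'}"

definition class_of :: "'v set \<Rightarrow> 'v \<Rightarrow> ('v \<Rightarrow> 'v) \<Rightarrow> ('v \<Rightarrow> 'c) \<Rightarrow> 'c list \<Rightarrow> 'c list set" where
  "class_of V r par lab Y = {Y' \<in> Substr_b V r par lab. mx_b V r par lab Y' = mx_b V r par lab Y}"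

definition rep :: "'v set \<Rightarrow> 'v \<Rightarrow> ('v \<Rightarrow> 'v) \<Rightarrow> ('v \<Rightarrow> 'c) \<Rightarrow> 'c list set \<Rightarrow> 'c list" where
  "rep V r par lab C = mx_b V r par lab (SOME Y. Y \<in> C)"

definition ext_b :: "'v set \<Rightarrow> 'v \<Rightarrow> ('v \<Rightarrow> 'v) \<Rightarrow> ('v \<Rightarrow> 'c) \<Rightarrow> 'c list \<Rightarrow> 'c list" where
  "ext_b V r par lab X = (SOME \<beta>. right_max V r par lab (X @ \<beta>) \<and>
      (\<forall>\<beta>'. right_max V r par lab (X @ \<beta>') \<longrightarrow> length \<beta> \<le> length \<beta>'))"

definition cdawg_edges :: "'v set \<Rightarrow> 'v \<Rightarrow> ('v \<Rightarrow> 'v) \<Rightarrow> ('v \<Rightarrow> 'c) \<Rightarrow>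
    ('c list set \<times> 'c list \<times> 'c list set) set" where
  "cdawg_edges V r par lab =
     {(C, a # ext_b V r par lab (rep V r par lab C @ [a]),
          class_of V r par lab (rep V r par lab C @ [a])) | C a.
        C \<in> cdawg_nodes V r par lab \<and> rep V r par lab C @ [a] \<in> Substr_b V r par lab}"

end

theory Submission
  imports Defs
begin

locale trieL =
  fixes V :: "'v set" and r :: 'v and par :: "'v \<Rightarrow> 'v" and lab :: "'v \<Rightarrow> 'c"
  assumes tr: "is_trie V r par lab"
begin

abbreviation "S \<equiv> Substr_b V r par lab"
abbreviation "R \<equiv> {Y. right_max V r par lab Y}"
definition "P = {Y. \<exists>v k. v\<in>V \<and> up_ok r par v k \<and> (par^^k) v = r \<and> Y = str_b par lab v k}"
definition "D = {(Y,a). Y \<in> R \<and> Y@[a] \<in> S}"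

lemma finV: "finite V" and rV: "r \<in> V" and parV: "v\<in>V \<Longrightarrow> v\<noteq>r \<Longrightarrow> par v \<in> V"
  and reach: "v\<in>V \<Longrightarrow> \<exists>k. (par^^k) v = r"
  and sib: "v\<in>V \<Longrightarrow> w\<in>V \<Longrightarrow> v\<noteq>r \<Longrightarrow> w\<noteq>r \<Longrightarrow> v\<noteq>w \<Longrightarrow> par v = par w \<Longrightarrow> lab v \<noteq> lab w"
  using tr unfolding is_trie_def by blast+

lemma up_ok_Suc: "up_ok r par w (Suc k) \<longleftrightarrow> w \<noteq> r \<and> up_ok r par (par w) k"
  unfolding up_ok_def by (auto simp: less_Suc_eq_0_disj funpow_Suc_right simp del: funpow.simps)

lemma up_ok_mono: "up_ok r par v k \<Longrightarrow> j \<le> k \<Longrightarrow> up_ok r par v j"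
  unfolding up_ok_def by auto

lemma str_b_Suc: "str_b par lab w (Suc k) = lab w # str_b par lab (par w) k"
  unfolding str_b_def
  by (simp add: upt_conv_Cons map_Suc_upt[symmetric] funpow_Suc_right del: upt_Suc funpow.simps)

lemma str_b_take: "k \<le> K \<Longrightarrow> str_b par lab v k = take k (str_b par lab v K)"
  unfolding str_b_def by (simp add: take_map take_upt)

lemma closure: "v\<in>V \<Longrightarrow> up_ok r par v k \<Longrightarrow> (par^^k) v \<in> V"
proof (induction k)
  case 0 then show ?case by simp
next
  case (Suc k)
  have "up_ok r par v k" using Suc.prems up_ok_mono by fastforce
  moreover have "(par^^k) v \<noteq> r" using Suc.prems unfolding up_ok_def by auto
  ultimately show ?case using Suc parV by simp
qed

lemma up_ok_bound: "(par^^K) v = r \<Longrightarrow> up_ok r par v k \<Longrightarrow> k \<le> K"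
  unfolding up_ok_def using not_le by metis

lemma depth: "v\<in>V \<Longrightarrow> \<exists>K. up_ok r par v K \<and> (par^^K) v = r"
proof -
  assume "v\<in>V"
  then obtain k where k: "(par^^k) v = r" using reach by blast
  define K where "K = (LEAST k. (par^^k) v = r)"
  have "(par^^K) v = r" unfolding K_def using k by (rule LeastI)
  moreover have "up_ok r par v K" unfolding up_ok_def K_def using not_less_Least by blast
  ultimately show ?thesis by blast
qed

lemma finS: "finite S"
proof -
  define d where "d v = (LEAST k. (par^^k) v = r)" for v
  have "S \<subseteq> (\<lambda>(v,k). str_b par lab v k) ` (SIGMA v:V. {..d v})"
  proof
    fix Y assume "Y \<in> S"
    then obtain v k where v: "v\<in>V" "up_ok r par v k" "Y = str_b par lab v k"
      unfolding Substr_b_def by blast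
    obtain k0 where "(par^^k0) v = r" using reach v(1) by blast
    then have "(par^^d v) v = r" unfolding d_def by (rule LeastI)
    then have "k \<le> d v" using up_ok_bound v(2) by blast
    then show "Y \<in> (\<lambda>(v,k). str_b par lab v k) ` (SIGMA v:V. {..d v})" using v by force
  qed
  moreover have "finite (SIGMA v:V. {..d v})" using finV by blast
  then have "finite ((\<lambda>(v,k). str_b par lab v k) ` (SIGMA v:V. {..d v}))" by (rule finite_imageI)
  ultimately show ?thesis by (rule finite_subset)
qed

lemma P_S: "P \<subseteq> S" unfolding P_def Substr_b_def by blast
lemma P_R: "P \<subseteq> R" using P_S unfolding P_def right_max_def by blast
lemma finR: "finite R" using finS unfolding right_max_def by (simp add: finite_subset)

lemma cardP: "card P \<le> card V"
proof -
  define d where "d v = (LEAST k. (par^^k) v = r)" for v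
  have "P \<subseteq> (\<lambda>v. str_b par lab v (d v)) ` V"
  proof
    fix Y assume "Y \<in> P"
    then obtain v k where v: "v\<in>V" "up_ok r par v k" "(par^^k) v = r" "Y = str_b par lab v k"
      unfolding P_def by blast
    have "d v = k" unfolding d_def
    proof (rule Least_equality)
      show "(par^^k) v = r" by fact
      show "\<And>y. (par ^^ y) v = r \<Longrightarrow> k \<le> y" using up_ok_bound v(2) by blast
    qed
    then show "Y \<in> (\<lambda>v. str_b par lab v (d v)) ` V" using v by blast
  qed
  then show ?thesis using finV surj_card_le by (metis card_image_le card_mono finite_imageI order_trans)
qed

lemma root_str_S: "v\<in>V \<Longrightarrow> up_ok r par v k \<Longrightarrow> str_b par lab v k \<in> S"
  unfolding Substr_b_def by blast

lemma extend_root: assumes "Y \<in> S"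
  shows "\<exists>X\<in>P. \<exists>\<delta>. X = Y @ \<delta>"
proof -
  obtain v k where v: "v\<in>V" "up_ok r par v k" "Y = str_b par lab v k"
    using assms unfolding Substr_b_def by blast
  obtain K where K: "up_ok r par v K" "(par^^K) v = r" using depth v(1) by blast
  have "k \<le> K" using up_ok_bound K(2) v(2) by blast
  then have "Y = take k (str_b par lab v K)" using v(3) str_b_take by blast
  then have "str_b par lab v K = Y @ drop k (str_b par lab v K)" by (metis append_take_drop_id)
  moreover have "str_b par lab v K \<in> P" unfolding P_def using v K by blast
  ultimately show ?thesis by blast
qed

lemma mx_exists: assumes "Y \<in> S"
  shows "\<exists>M. maximal_b V r par lab M \<and> is_factor Y M"
proof -
  define A where "A = {X\<in>P. is_factor Y X}"
  have "A \<subseteq> S" unfolding A_def using P_S by blast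
  then have finA: "finite A" using finS by (rule finite_subset)
  obtain X0 \<delta> where "X0 \<in> P" "X0 = Y @ \<delta>" using extend_root[OF assms] by blast
  then have "X0 = [] @ Y @ \<delta>" "X0 \<in> P" by simp_all
  then have "X0 \<in> A" unfolding A_def is_factor_def by blast
  then have ne: "A \<noteq> {}" by blast
  define m where "m = Max (length ` A)"
  have "m \<in> length ` A" unfolding m_def using finA ne by simp
  then obtain X where X: "X \<in> A" "length X = m" by blast
  have Xmax: "length X' \<le> length X" if "X' \<in> A" for X'
  proof -
    have "length X' \<in> length ` A" using that by blast
    then have "length X' \<le> m" unfolding m_def using finA by (simp add: Max_ge)
    then show ?thesis using X(2) by simp
  qed
  obtain u K where u: "u\<in>V" "up_ok r par u K" "(par^^K) u = r" "X = str_b par lab u K"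
    using X(1) unfolding A_def P_def by blast
  have leaf: "is_leaf V r par u"
  proof (rule ccontr)
    assume "\<not> is_leaf V r par u"
    then obtain w where w: "w\<in>V" "w\<noteq>r" "par w = u" using u(1) unfolding is_leaf_def by blast
    have e1: "lab w # X = str_b par lab w (Suc K)" using w u by (simp add: str_b_Suc)
    have e2: "up_ok r par w (Suc K)" using w u by (simp add: up_ok_Suc)
    have e3: "(par^^Suc K) w = r" using w u by (simp add: funpow_Suc_right del: funpow.simps)
    have "lab w # X \<in> P" unfolding P_def using w(1) e1 e2 e3 by blast
    moreover have "is_factor Y (lab w # X)"
    proof -
      obtain \<gamma> \<delta> where "X = \<gamma> @ Y @ \<delta>" using X(1) unfolding A_def is_factor_def by blast
      then have "lab w # X = (lab w # \<gamma>) @ Y @ \<delta>" by simp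
      then show ?thesis unfolding is_factor_def by blast
    qed
    ultimately have "lab w # X \<in> A" unfolding A_def by blast
    then show False using Xmax[of "lab w # X"] by simp
  qed
  have "X \<in> S" using X(1) P_S unfolding A_def by blast
  then have "right_max V r par lab X" unfolding right_max_def using u by blast
  moreover have "left_max V r par lab X" unfolding left_max_def using \<open>X\<in>S\<close> leaf u by blast
  ultimately show ?thesis using X(1) unfolding maximal_b_def A_def by blast
qed

lemma mx_max: assumes "Y \<in> S" shows "maximal_b V r par lab (mx_b V r par lab Y)"
proof -
  obtain M where "maximal_b V r par lab M \<and> is_factor Y M" using mx_exists assms by blast
  then have "\<exists>M. (maximal_b V r par lab M \<and> is_factor Y M) \<and>
     (\<forall>M'. maximal_b V r par lab M' \<and> is_factor Y M' \<longrightarrow> length M \<le> length M')"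
    by (rule ex_has_least_nat)
  then have "\<exists>M. maximal_b V r par lab M \<and> is_factor Y M \<and>
     (\<forall>M'. maximal_b V r par lab M' \<and> is_factor Y M' \<longrightarrow> length M \<le> length M')" by blast
  from someI_ex[OF this] show ?thesis unfolding mx_b_def by blast
qed

lemma mx_R: "Y \<in> S \<Longrightarrow> mx_b V r par lab Y \<in> R"
  using mx_max unfolding maximal_b_def by blast

lemma ext_prop: assumes "X \<in> S"
  shows "right_max V r par lab (X @ ext_b V r par lab X) \<and>
    (\<forall>\<beta>'. right_max V r par lab (X @ \<beta>') \<longrightarrow> length (ext_b V r par lab X) \<le> length \<beta>')"
proof -
  obtain Z \<delta> where "Z \<in> P" "Z = X @ \<delta>" using extend_root[OF assms] by blast
  then have "right_max V r par lab (X @ \<delta>)" using P_R by blast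
  then have "\<exists>\<beta>. right_max V r par lab (X @ \<beta>) \<and>
      (\<forall>\<beta>'. right_max V r par lab (X @ \<beta>') \<longrightarrow> length \<beta> \<le> length \<beta>')"
    by (rule ex_has_least_nat[where m=length and P="\<lambda>\<beta>. right_max V r par lab (X @ \<beta>)"])
  from someI_ex[OF this] show ?thesis unfolding ext_b_def by blast
qed

definition "g = (\<lambda>(Y,a). Y @ [a] @ ext_b V r par lab (Y @ [a]))"

lemma g_lt: assumes "Y @ [a] \<in> S" "Y' \<in> R" "length Y < length Y'"
  and eq: "Y @ [a] @ ext_b V r par lab (Y @ [a]) = Y' @ [a'] @ \<beta>'"
  shows False
proof -
  define \<beta> where "\<beta> = ext_b V r par lab (Y @ [a])"
  define Z where "Z = Y @ [a] @ \<beta>"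
  have min: "\<And>\<gamma>. right_max V r par lab (Y @ [a] @ \<gamma>) \<Longrightarrow> length \<beta> \<le> length \<gamma>"
    using ext_prop[OF assms(1)] unfolding \<beta>_def by simp
  define j where "j = length Y' - Suc (length Y)"
  have "Y' = take (length Y') Z" using eq unfolding Z_def \<beta>_def by simp
  also have "\<dots> = Y @ [a] @ take j \<beta>" unfolding Z_def j_def using assms(3)
    by (simp add: take_append Suc_diff_Suc take_Cons')
  finally have "right_max V r par lab (Y @ [a] @ take j \<beta>)" using assms(2) by simp
  then have "length \<beta> \<le> length (take j \<beta>)" using min by blast
  moreover have "Z = Y' @ [a'] @ \<beta>'" using eq unfolding Z_def \<beta>_def by simp
  then have "length Z > length Y'" by simp
  ultimately have h1: "length \<beta> \<le> j" and h2: "length Y' < length Y + 1 + length \<beta>"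
    unfolding Z_def by auto
  show False using h1 h2 assms(3) unfolding j_def by arith
qed

lemma g_inj: "inj_on g D"
proof (rule inj_onI)
  fix p q assume p: "p \<in> D" and q: "q \<in> D" and e: "g p = g q"
  obtain Y a where pY: "p = (Y,a)" by (cases p)
  obtain Y' a' where qY: "q = (Y',a')" by (cases q)
  have e': "Y @ [a] @ ext_b V r par lab (Y @ [a]) = Y' @ [a'] @ ext_b V r par lab (Y' @ [a'])"
    using e unfolding g_def pY qY by simp
  have yd: "Y @ [a] \<in> S" "Y \<in> R" using p unfolding pY D_def by auto
  have yd': "Y' @ [a'] \<in> S" "Y' \<in> R" using q unfolding qY D_def by auto
  have "\<not> length Y < length Y'" using g_lt[OF yd(1) yd'(2) _ e'] by blast
  moreover have "\<not> length Y' < length Y" using g_lt[OF yd'(1) yd(2) _ e'[symmetric]] by blast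
  ultimately have "length Y = length Y'" by simp
  then show "p = q" using e' unfolding pY qY by simp
qed

lemma g_img: "g ` D \<subseteq> R - {[]}"
proof
  fix z assume "z \<in> g ` D"
  then obtain Y a where "(Y,a) \<in> D" "z = g (Y,a)" by auto
  then show "z \<in> R - {[]}" using ext_prop[of "Y@[a]"] unfolding D_def g_def by auto
qed

lemma nil_R: "[] \<in> R"
proof -
  have "str_b par lab r 0 = []" unfolding str_b_def by simp
  moreover have "up_ok r par r 0" unfolding up_ok_def by simp
  ultimately have "[] \<in> P" unfolding P_def using rV by force
  then show ?thesis using P_R by blast
qed

lemma finD: "finite D"
proof -
  have "g ` D \<subseteq> R" using g_img by blast
  then have "finite (g ` D)" using finR by (rule finite_subset)
  then show ?thesis using g_inj by (rule finite_imageD)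
qed

lemma cardD: "card D + 1 \<le> card R"
proof -
  have "card D = card (g ` D)" using g_inj card_image by metis
  also have "\<dots> \<le> card (R - {[]})" using g_img finR by (simp add: card_mono)
  also have "\<dots> = card R - 1" using nil_R finR by simp
  finally have "card D \<le> card R - 1" .
  moreover have "card R \<noteq> 0" using nil_R finR by auto
  ultimately show ?thesis by linarith
qed

definition "E Y = {a. Y @ [a] \<in> S}"

lemma finE: "finite (E Y)"
proof -
  have i: "inj_on (\<lambda>a. Y @ [a]) (E Y)" by (rule inj_onI) simp
  have "(\<lambda>a. Y @ [a]) ` E Y \<subseteq> S" unfolding E_def by auto
  then have "finite ((\<lambda>a. Y @ [a]) ` E Y)" using finS by (rule finite_subset)
  then show ?thesis using i by (rule finite_imageD)
qed

lemma cardE: assumes "Y \<in> R - P" shows "2 \<le> card (E Y)"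
proof -
  have "\<exists>a b. a \<noteq> b \<and> Y @ [a] \<in> S \<and> Y @ [b] \<in> S"
    using assms unfolding right_max_def P_def by blast
  then obtain a b where ab: "a \<noteq> b" "a \<in> E Y" "b \<in> E Y" unfolding E_def by blast
  then have "card {a,b} \<le> card (E Y)" using finE by (intro card_mono) auto
  then show ?thesis using ab by simp
qed

lemma inS: "v\<in>V \<Longrightarrow> up_ok r par v k \<Longrightarrow> Y = str_b par lab v k \<Longrightarrow> Y \<in> S"
  unfolding Substr_b_def by blast

lemma inP: "v\<in>V \<Longrightarrow> up_ok r par v k \<Longrightarrow> (par^^k) v = r \<Longrightarrow> Y = str_b par lab v k \<Longrightarrow> Y \<in> P"
  unfolding P_def by blast

lemma two_pairs: assumes "3 \<le> card V"
  shows "\<exists>p q. p \<noteq> q \<and> p \<in> D \<and> q \<in> D \<and> fst p \<in> P \<and> fst q \<in> P"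
proof -
  have nP: "[] \<in> P"
  proof (rule inP[OF rV])
    show "[] = str_b par lab r 0" unfolding str_b_def by simp
    show "up_ok r par r 0" unfolding up_ok_def by simp
    show "(par^^0) r = r" by simp
  qed
  have one: "[lab x] \<in> S" if "x \<in> V" "x \<noteq> r" for x
  proof (rule inS[OF that(1)])
    show "[lab x] = str_b par lab x 1" unfolding str_b_def by simp
    show "up_ok r par x 1" using that(2) unfolding up_ok_def by simp
  qed
  have c2: "2 \<le> card (V - {r})" using assms finV rV by simp
  have "V - {r} \<noteq> {}"
  proof
    assume "V - {r} = {}"
    then have "card (V - {r}) = 0" by (simp only: card.empty)
    then show False using c2 by simp
  qed
  then obtain v where v: "v \<in> V - {r}" by blast
  have "1 \<le> card (V - {r} - {v})" using v c2 finV by simp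
  then have "0 < card (V - {r} - {v})" by simp
  then have "V - {r} - {v} \<noteq> {}" unfolding card_gt_0_iff by blast
  then obtain w where "w \<in> V - {r} - {v}" by blast
  then have vw: "v \<in> V - {r}" "w \<in> V - {r}" "v \<noteq> w" using v by auto
  have nR: "[] \<in> R" using nP P_R by blast
  show ?thesis
  proof (cases "\<exists>x\<in>V-{r}. \<exists>y\<in>V-{r}. lab x \<noteq> lab y")
    case True
    then obtain x y where xy: "x\<in>V-{r}" "y\<in>V-{r}" "lab x \<noteq> lab y" by blast
    have "[] @ [lab x] \<in> S" using one xy(1) by simp
    then have d1: "([], lab x) \<in> D" using nR unfolding D_def by simp
    have "[] @ [lab y] \<in> S" using one xy(2) by simp
    then have d2: "([], lab y) \<in> D" using nR unfolding D_def by simp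
    show ?thesis
      apply (rule exI[of _ "([], lab x)"], rule exI[of _ "([], lab y)"])
      using d1 d2 xy(3) nP by simp
  next
    case False
    define a where "a = lab v"
    have alla: "\<And>x. x \<in> V - {r} \<Longrightarrow> lab x = a" using False vw unfolding a_def by blast
    have "par v \<noteq> r \<or> par w \<noteq> r"
    proof (rule ccontr)
      assume "\<not> (par v \<noteq> r \<or> par w \<noteq> r)"
      then have "par v = par w" by simp
      moreover have "lab v = lab w" using alla vw by simp
      ultimately show False using sib vw by blast
    qed
    then obtain x where x: "x \<in> V - {r}" "par x \<noteq> r" using vw by blast
    have px: "par x \<in> V - {r}" using x parV by blast
    have aa: "[a,a] \<in> S"
    proof (rule inS)
      show "x \<in> V" using x by simp
      have "str_b par lab x 2 = [lab x, lab (par x)]" unfolding str_b_def by (simp add: numeral_2_eq_2)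
      then show "[a,a] = str_b par lab x 2" using alla x px by simp
      show "up_ok r par x 2" using x unfolding up_ok_def by (auto simp: numeral_2_eq_2 less_Suc_eq)
    qed
    obtain K where K: "up_ok r par x K" "(par^^K) x = r" using depth x by blast
    have "K \<noteq> 0"
    proof
      assume "K = 0"
      then have "x = r" using K(2) by simp
      then show False using x by simp
    qed
    then obtain j where j: "K = Suc j" using not0_implies_Suc by blast
    define u where "u = (par^^j) x"
    have "up_ok r par x j" using up_ok_mono K(1) j by simp
    then have uV: "u \<in> V" unfolding u_def using closure x by simp
    have ur: "u \<noteq> r" unfolding u_def using K(1) j unfolding up_ok_def by simp
    have pu: "par u = r" unfolding u_def using K(2) j by simp
    have aP: "[a] \<in> P"
    proof (rule inP[OF uV])
      show "[a] = str_b par lab u 1" unfolding str_b_def using uV ur alla by simp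
      show "up_ok r par u 1" using ur unfolding up_ok_def by simp
      show "(par^^1) u = r" using pu by simp
    qed
    have aS: "[] @ [a] \<in> S" using aP P_S by auto
    have d1: "([], a) \<in> D" using aS nR unfolding D_def by simp
    have aR: "[a] \<in> R" using aP P_R by blast
    have d2: "([a], a) \<in> D" using aR aa unfolding D_def by simp
    show ?thesis
      apply (rule exI[of _ "([], a)"], rule exI[of _ "([a], a)"])
      using d1 d2 aP nP by simp
  qed
qed

lemma cardR: assumes "3 \<le> card V" shows "card R + 3 \<le> 2 * card V"
proof -
  define B where "B = R - P"
  obtain p q where pq: "p \<noteq> q" "p \<in> D" "q \<in> D" "fst p \<in> P" "fst q \<in> P"
    using two_pairs assms by blast
  have finB: "finite B" unfolding B_def using finR by simp
  have "Sigma B E \<subseteq> D" unfolding D_def B_def E_def by auto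
  then have sub: "Sigma B E \<union> {p,q} \<subseteq> D" using pq(2,3) by blast
  have disj: "Sigma B E \<inter> {p,q} = {}" unfolding B_def using pq(4,5) by auto
  have "card (Sigma B E) = (\<Sum>Y\<in>B. card (E Y))" using finB finE by (simp add: card_SigmaI)
  moreover have "(\<Sum>Y\<in>B. 2) \<le> (\<Sum>Y\<in>B. card (E Y))" using cardE unfolding B_def by (intro sum_mono) auto
  ultimately have s1: "2 * card B \<le> card (Sigma B E)" by simp
  have "card (Sigma B E \<union> {p,q}) = card (Sigma B E) + 2"
    using disj pq(1) finB finE by (subst card_Un_disjoint) auto
  then have "2 * card B + 2 \<le> card D" using card_mono[OF finD sub] s1 by linarith
  moreover have "card R \<le> card P + card B"
  proof -
    have "R \<subseteq> P \<union> B" unfolding B_def by blast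
    moreover have "finite (P \<union> B)" using finR finB P_R by (simp add: finite_subset)
    ultimately have "card R \<le> card (P \<union> B)" by (rule card_mono[rotated])
    also have "\<dots> \<le> card P + card B" by (rule card_Un_le)
    finally show ?thesis .
  qed
  ultimately show ?thesis using cardD cardP by linarith
qed

lemma node_class: assumes "C \<in> cdawg_nodes V r par lab"
  shows "\<exists>Y0\<in>S. C = {Y'\<in>S. mx_b V r par lab Y0 = mx_b V r par lab Y'} \<and>
     rep V r par lab C = mx_b V r par lab Y0"
proof -
  obtain Y0 where Y0: "Y0 \<in> S" "C = {(Y, Y'). Y \<in> S \<and> Y' \<in> S \<and> mx_b V r par lab Y = mx_b V r par lab Y'} `` {Y0}"
    using assms unfolding cdawg_nodes_def by (auto elim: quotientE)
  then have C: "C = {Y'\<in>S. mx_b V r par lab Y0 = mx_b V r par lab Y'}" by auto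
  then have "Y0 \<in> C" using Y0 by simp
  then have "(SOME Y. Y \<in> C) \<in> C" by (rule someI)
  then have "mx_b V r par lab (SOME Y. Y \<in> C) = mx_b V r par lab Y0" using C by simp
  then show ?thesis using Y0(1) C unfolding rep_def by blast
qed

lemma rep_R: "C \<in> cdawg_nodes V r par lab \<Longrightarrow> rep V r par lab C \<in> R"
proof -
  assume "C \<in> cdawg_nodes V r par lab"
  then obtain Y0 where "Y0 \<in> S" "rep V r par lab C = mx_b V r par lab Y0" using node_class by blast
  then show ?thesis using mx_R by simp
qed

lemma rep_inj: "inj_on (rep V r par lab) (cdawg_nodes V r par lab)"
proof (rule inj_onI)
  fix C C' assume "C \<in> cdawg_nodes V r par lab" "C' \<in> cdawg_nodes V r par lab"
    and e: "rep V r par lab C = rep V r par lab C'"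
  then obtain Y0 Y1 where "C = {Y'\<in>S. mx_b V r par lab Y0 = mx_b V r par lab Y'}"
    "rep V r par lab C = mx_b V r par lab Y0"
    "C' = {Y'\<in>S. mx_b V r par lab Y1 = mx_b V r par lab Y'}"
    "rep V r par lab C' = mx_b V r par lab Y1" using node_class by meson
  then show "C = C'" using e by simp
qed

lemma card_nodes: "card (cdawg_nodes V r par lab) \<le> card R"
  using card_inj_on_le[OF rep_inj _ finR] rep_R by blast

lemma card_edges: "card (cdawg_edges V r par lab) \<le> card D"
proof -
  define D' where "D' = {(C,a). C \<in> cdawg_nodes V r par lab \<and> rep V r par lab C @ [a] \<in> S}"
  define h :: "'c list set \<times> 'c \<Rightarrow> 'c list \<times> 'c" where "h = (\<lambda>(C,a). (rep V r par lab C, a))"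
  have hi: "inj_on h D'" unfolding h_def D'_def using rep_inj by (auto simp: inj_on_def)
  have hs: "h ` D' \<subseteq> D" unfolding h_def D'_def D_def using rep_R by auto
  have "finite (h ` D')" using hs finD by (rule finite_subset)
  then have finD': "finite D'" using hi by (rule finite_imageD)
  have "cdawg_edges V r par lab \<subseteq> (\<lambda>(C,a). (C, a # ext_b V r par lab (rep V r par lab C @ [a]),
          class_of V r par lab (rep V r par lab C @ [a]))) ` D'"
    unfolding cdawg_edges_def D'_def by auto
  then have "card (cdawg_edges V r par lab) \<le> card D'"
    using finD' by (meson card_image_le card_mono finite_imageI order_trans)
  also have "\<dots> \<le> card D" using card_inj_on_le[OF hi hs finD] .
  finally show ?thesis .
qed

end

theorem theorem8:
  fixes V :: "'v set" and r :: 'v and par :: "'v \<Rightarrow> 'v" and lab :: "'v \<Rightarrow> 'c" and n :: nat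
  assumes "is_trie V r par lab"
    and "card V = n"
    and "n \<ge> 3"
  shows "card (cdawg_nodes V r par lab) \<le> 2 * n - 3
       \<and> card (cdawg_edges V r par lab) \<le> 2 * n - 4"
proof -
  interpret trieL V r par lab using assms(1) by unfold_locales
  have "card R + 3 \<le> 2 * n" using cardR assms by simp
  then show ?thesis using card_nodes card_edges cardD by linarith
qed

end
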